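(* Let $p\ge 2$ and $n\ge 1$ be integers, let $\Sigma$ be a real $p\times p$ symmetric positive definite matrix, and let $x_1,\dots,x_n$ be i.i.d. $N(0,\Sigma)$ random vectors in $\mathbb{R}^p$. Let $\widehat S=\frac1n\sum_{i=1}^n x_ix_i^T$ and $\widehat F=\frac{\mathrm{Tr}(\widehat S)}{p}I_p$. Then the function $$\rho\mapsto E\left\{\left\|(1-\rho)\widehat S+\rho \widehat F-\Sigma\right\|_F^2\right\},\qquad \rho\in\mathbb{R},$$ has a unique minimizer $\rho_O$, and $$\rho_O=\frac{E\{\mathrm{Tr}((\Sigma-\widehat S)(\widehat F-\widehat S))\}}{E\{\|\widehat S-\widehat F\|_F^2\}}=\frac{(1-2/p)\,\mathrm{Tr}(\Sigma^2)+\mathrm{Tr}^2(\Sigma)}{(n+1-2/p)\,\mathrm{Tr}(\Sigma^2)+(1-n/p)\,\mathrm{Tr}^2(\Sigma)}.$$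
   Context: $\|\cdot\|_F$ is the Frobenius norm, $\mathrm{Tr}$ the trace, and $\mathrm{Tr}^2(A)$ means $(\mathrm{Tr}(A))^2$. $\widehat S$ is called the sample covariance and $\widehat F$ the shrinkage target; the estimator $(1-\rho_O)\widehat S+\rho_O\widehat F$ is called the oracle estimator. *)

theory Defs
  imports "HOL-Analysis.Analysis" "HOL-Probability.Probability"
begin

definition sym_posdef :: "real^'p^'p \<Rightarrow> bool" where
  "sym_posdef A \<longleftrightarrow> transpose A = A \<and> (\<forall>x. x \<noteq> 0 \<longrightarrow> x \<bullet> (A *v x) > 0)"

definition mvn_density :: "real^'p^'p \<Rightarrow> real^'p \<Rightarrow> ennreal" where
  "mvn_density Sig x = ennreal ((2 * pi) powr (- real CARD('p) / 2) * det Sig powr (-1/2)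
      * exp (- (x \<bullet> (matrix_inv Sig *v x)) / 2))"

definition outer :: "real^'p \<Rightarrow> real^'p^'p" where
  "outer x = (\<chi> i j. x $ i * x $ j)"

definition frob_sq :: "real^'p^'p \<Rightarrow> real" where
  "frob_sq A = (\<Sum>i\<in>UNIV. \<Sum>j\<in>UNIV. (A $ i $ j)^2)"

definition sample_cov :: "nat \<Rightarrow> (nat \<Rightarrow> real^'p) \<Rightarrow> real^'p^'p" where
  "sample_cov n x = (1 / real n) *\<^sub>R (\<Sum>i\<in>{1..n}. outer (x i))"

definition shrink_target :: "real^'p^'p \<Rightarrow> real^'p^'p" where
  "shrink_target S = (trace S / real CARD('p)) *\<^sub>R mat 1"

end

theory Submission
  imports Defs
begin


proposition
 fixes f :: "real^'n::finite \<Rightarrow> real^'n::_"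
  assumes "linear f" "S \<in> lmeasurable"
  shows measurable_linear_image'': "(f ` S) \<in> lmeasurable"
    and measure_linear_image'': "measure lebesgue (f ` S) = \<bar>det (matrix f)\<bar> * measure lebesgue S" (is "?Q f S")
proof -
  have "\<forall>S \<in> lmeasurable. (f ` S) \<in> lmeasurable \<and> ?Q f S"
  proof (rule induct_linear_elementary [OF \<open>linear f\<close>]; intro ballI)
    fix f g and S :: "(real,'n) vec set"
    assume "linear f" and "linear g"
      and f [rule_format]: "\<forall>S \<in> lmeasurable. f ` S \<in> lmeasurable \<and> ?Q f S"
      and g [rule_format]: "\<forall>S \<in> lmeasurable. g ` S \<in> lmeasurable \<and> ?Q g S"
      and S: "S \<in> lmeasurable"
    then have gS: "g ` S \<in> lmeasurable"
      by blast
    show "(f \<circ> g) ` S \<in> lmeasurable \<and> ?Q (f \<circ> g) S"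
      using f [OF gS] g [OF S] matrix_compose [OF \<open>linear g\<close> \<open>linear f\<close>]
      by (simp add: o_def image_comp abs_mult det_mul)
  next
    fix f :: "real^'n::_ \<Rightarrow> real^'n::_" and i and S :: "(real^'n::_) set"
    assume "linear f" and 0: "\<And>x. f x $ i = 0" and "S \<in> lmeasurable"
    then have "\<not> inj f"
      by (metis (full_types) linear_injective_imp_surjective one_neq_zero surjE vec_component)
    have detf: "det (matrix f) = 0"
      using \<open>\<not> inj f\<close> det_nz_iff_inj[OF \<open>linear f\<close>] by blast
    show "f ` S \<in> lmeasurable \<and> ?Q f S"
    proof
      show "f ` S \<in> lmeasurable"
        using lmeasurable_iff_indicator_has_integral \<open>linear f\<close> \<open>\<not> inj f\<close> negligible_UNIV negligible_linear_singular_image by blast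
      have "measure lebesgue (f ` S) = 0"
        by (meson \<open>\<not> inj f\<close> \<open>linear f\<close> negligible_imp_measure0 negligible_linear_singular_image)
      also have "\<dots> = \<bar>det (matrix f)\<bar> * measure lebesgue S"
        by (simp add: detf)
      finally show "?Q f S" .
    qed
  next
    fix c and S :: "(real^'n::_) set"
    assume "S \<in> lmeasurable"
    show "(\<lambda>a. \<chi> i. c i * a $ i) ` S \<in> lmeasurable \<and> ?Q (\<lambda>a. \<chi> i. c i * a $ i) S"
    proof
      show "(\<lambda>a. \<chi> i. c i * a $ i) ` S \<in> lmeasurable"
        by (simp add: \<open>S \<in> lmeasurable\<close> measurable_stretch)
      show "?Q (\<lambda>a. \<chi> i. c i * a $ i) S"
        by (simp add: measure_stretch [OF \<open>S \<in> lmeasurable\<close>, of c] axis_def matrix_def det_diagonal)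
    qed
  next
    fix m :: "'n" and n :: "'n" and S :: "(real, 'n) vec set"
    assume "m \<noteq> n" and "S \<in> lmeasurable"
    let ?h = "\<lambda>v::(real, 'n) vec. \<chi> i. v $ Transposition.transpose m n i"
    have lin: "linear ?h"
      by (rule linearI) (simp_all add: plus_vec_def scaleR_vec_def)
    have meq: "measure lebesgue ((\<lambda>v::(real, 'n) vec. \<chi> i. v $ Transposition.transpose m n i) ` cbox a b)
             = measure lebesgue (cbox a b)" for a b
    proof (cases "cbox a b = {}")
      case True then show ?thesis
        by simp
    next
      case False
      then have him: "?h ` (cbox a b) \<noteq> {}"
        by blast
      have eq: "?h ` (cbox a b) = cbox (?h a) (?h b)"
        by (auto simp: image_iff lambda_swap_Galois mem_box_cart) (metis transpose_involutory)+
      show ?thesis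
        using him prod.permute [OF permutes_swap_id, where S=UNIV and g="\<lambda>i. (b - a)$i", symmetric]
        by (simp add: eq content_cbox_cart False)
    qed
    have "(\<chi> i j. if Transposition.transpose m n i = j then 1 else 0) = (\<chi> i j. if j = Transposition.transpose m n i then 1 else (0::real))"
      by (auto intro!: Cart_lambda_cong)
    then have "matrix ?h = transpose(\<chi> i j. mat 1 $ i $ Transposition.transpose m n j)"
      by (auto simp: matrix_eq transpose_def axis_def mat_def matrix_def)
    then have 1: "\<bar>det (matrix ?h)\<bar> = 1"
      by (simp add: det_permute_columns permutes_swap_id sign_swap_id abs_mult)
    show "?h ` S \<in> lmeasurable \<and> ?Q ?h S"
      using measure_linear_sufficient [OF lin \<open>S \<in> lmeasurable\<close>] meq 1 by force
  next
    fix m n :: "'n" and S :: "(real, 'n) vec set"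
    assume "m \<noteq> n" and "S \<in> lmeasurable"
    let ?h = "\<lambda>v::(real, 'n) vec. \<chi> i. if i = m then v $ m + v $ n else v $ i"
    have lin: "linear ?h"
      by (rule linearI) (auto simp: algebra_simps plus_vec_def scaleR_vec_def vec_eq_iff)
    have mh: "matrix ?h = (\<chi> k. if k = m then row m (mat 1) + 1 *s row n (mat 1) else row k (mat 1 :: real^'n^'n))"
      by (auto simp: matrix_def vec_eq_iff row_def mat_def axis_def)
    have 1: "det(matrix ?h) = 1"
      unfolding mh by (simp add: det_row_operation[OF \<open>m \<noteq> n\<close>])
    have meq: "measure lebesgue (?h ` (cbox a b)) = measure lebesgue (cbox a b)" for a b
    proof (cases "cbox a b = {}")
      case True then show ?thesis by simp
    next
      case False
      then have ne: "(+) (\<chi> i. if i = n then - a $ n else 0) ` cbox a b \<noteq> {}"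
        by auto
      let ?v = "\<chi> i. if i = n then - a $ n else 0"
      have "?h ` cbox a b
            = (+) (\<chi> i. if i = m \<or> i = n then a $ n else 0) ` ?h ` (+) ?v ` (cbox a b)"
        using \<open>m \<noteq> n\<close> unfolding image_comp o_def by (force simp: vec_eq_iff)
      then have "measure lebesgue (?h ` (cbox a b))
               = measure lebesgue ((\<lambda>v. \<chi> i. if i = m then v $ m + v $ n else v $ i) `
                                   (+) ?v ` cbox a b)"
        by (rule ssubst) (rule measure_translation)
      also have "\<dots> = measure lebesgue ((\<lambda>v. \<chi> i. if i = m then v $ m + v $ n else v $ i) ` cbox (?v +a) (?v + b))"
        by (metis (no_types, lifting) cbox_translation)
      also have "\<dots> = measure lebesgue ((+) ?v ` cbox a b)"
        apply (subst measure_shear_interval)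
        using \<open>m \<noteq> n\<close> ne apply auto
        apply (simp add: cbox_translation)
        by (metis cbox_borel cbox_translation measure_completion sets_lborel)
      also have "\<dots> = measure lebesgue (cbox a b)"
        by (rule measure_translation)
        finally show ?thesis .
      qed
    show "?h ` S \<in> lmeasurable \<and> ?Q ?h S"
      using measure_linear_sufficient [OF lin \<open>S \<in> lmeasurable\<close>] meq 1 by force
  qed
  with assms show "(f ` S) \<in> lmeasurable" "?Q f S"
    by metis+
qed



lemma lborel_linear_density:
  fixes f :: "real^'n \<Rightarrow> real^'n"
  assumes lf: "linear f" and df: "det (matrix f) \<noteq> 0"
  shows "lborel = density (distr lborel borel f) (\<lambda>_. ennreal \<bar>det (matrix f)\<bar>)"
proof (rule lborel_eqI)
  obtain h where lh: "linear h" and hf: "\<And>x. h (f x) = x" and fh: "\<And>x. f (h x) = x"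
    using lf df det_nz_iff_inj linear_injective_isomorphism by metis
  have [measurable]: "f \<in> borel \<rightarrow>\<^sub>M borel"
    using lf by (simp add: borel_measurable_continuous_onI linear_continuous_on linear_linear)
  have dd: "\<bar>det (matrix f)\<bar> * \<bar>det (matrix h)\<bar> = 1"
  proof -
    have "matrix f ** matrix h = matrix (f \<circ> h)"
      using matrix_compose[OF lh lf] by simp
    also have "f \<circ> h = id" using fh by auto
    finally show ?thesis
      by (metis abs_1 abs_mult det_I det_mul matrix_id_mat_1)
  qed
  fix l u :: "real^'n"
  assume le: "\<And>b. b \<in> Basis \<Longrightarrow> l \<bullet> b \<le> u \<bullet> b"
  have pre: "f -` box l u = h ` box l u"
  proof (intro set_eqI iffI)
    fix x assume "x \<in> f -` box l u"
    then show "x \<in> h ` box l u" using hf[of x] by (metis image_eqI vimageE)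
  next
    fix x assume "x \<in> h ` box l u"
    then show "x \<in> f -` box l u" using fh by auto
  qed
  have hm: "h ` box l u \<in> lmeasurable"
    by (rule measurable_linear_image''[OF lh]) simp
  have hb: "h ` box l u \<in> sets borel"
    by (metis \<open>f \<in> borel \<rightarrow>\<^sub>M borel\<close> pre measurable_sets sets_lborel space_borel box_borel vimage_Int Int_UNIV_right)
  have "emeasure lborel (h ` box l u) = emeasure lebesgue (h ` box l u)"
    using hb by (simp add: emeasure_completion)
  also have "\<dots> = ennreal (measure lebesgue (h ` box l u))"
    using hm by (simp add: emeasure_eq_measure2)
  also have "\<dots> = ennreal (\<bar>det (matrix h)\<bar> * measure lebesgue (box l u))"
    using measure_linear_image''[OF lh, of "box l u"] by simp
  finally have eh: "emeasure lborel (h ` box l u) = ennreal (\<bar>det (matrix h)\<bar> * measure lebesgue (box l u))"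
    by simp
  have "emeasure (density (distr lborel borel f) (\<lambda>_. ennreal \<bar>det (matrix f)\<bar>)) (box l u)
      = ennreal \<bar>det (matrix f)\<bar> * emeasure lborel (f -` box l u)"
    by (simp add: emeasure_density emeasure_distr nn_integral_cmult_indicator)
  also have "\<dots> = ennreal (\<bar>det (matrix f)\<bar> * (\<bar>det (matrix h)\<bar> * measure lebesgue (box l u)))"
    unfolding pre eh by (simp add: ennreal_mult)
  also have "\<dots> = ennreal (measure lebesgue (box l u))"
    by (simp add: dd mult.assoc[symmetric])
  also have "\<dots> = (\<Prod>b\<in>Basis. (u - l) \<bullet> b)"
    using le by (simp add: emeasure_eq_measure2[symmetric] emeasure_completion emeasure_lborel_box_eq inner_diff_left)
  finally show "emeasure (density (distr lborel borel f) (\<lambda>_. ennreal \<bar>det (matrix f)\<bar>)) (box l u) = (\<Prod>b\<in>Basis. (u - l) \<bullet> b)" .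
qed simp


lemma quad_sym:
  fixes S :: "real^'n^'n"
  assumes "transpose S = S"
  shows "x \<bullet> (S *v y) = y \<bullet> (S *v x)"
proof -
  have s: "S $ i $ j = S $ j $ i" for i j
    using assms by (metis transpose_def vec_lambda_beta)
  have "x \<bullet> (S *v y) = (\<Sum>i\<in>UNIV. \<Sum>j\<in>UNIV. x $ i * S $ i $ j * y $ j)"
    by (simp add: inner_vec_def matrix_vector_mult_def sum_distrib_left mult.assoc)
  also have "\<dots> = (\<Sum>j\<in>UNIV. \<Sum>i\<in>UNIV. x $ i * S $ i $ j * y $ j)"
    by (rule sum.swap)
  also have "\<dots> = y \<bullet> (S *v x)"
    by (simp add: inner_vec_def matrix_vector_mult_def sum_distrib_left s mult_ac)
  finally show ?thesis .
qed

lemma aorth_basis: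
  fixes S :: "real^'n^'n"
  assumes sym: "transpose S = S" and pos: "\<And>x. x \<noteq> 0 \<Longrightarrow> x \<bullet> (S *v x) > 0"
  shows "subspace T \<Longrightarrow> \<exists>C. C \<subseteq> T \<and> finite C \<and> card C = dim T \<and>
            (\<forall>u\<in>C. \<forall>v\<in>C. u \<bullet> (S *v v) = (if u = v then 1 else 0))"
proof (induction "dim T" arbitrary: T)
  case 0
  then show ?case by (intro exI[of _ "{}"]) auto
next
  case (Suc k T)
  have "\<not> T \<subseteq> {0}"
    using Suc.hyps(2) by (metis dim_singleton dim_subset le_zero_eq nat.distinct(1))
  then obtain v where vT: "v \<in> T" and v0: "v \<noteq> 0" by blast
  define w where "w = S *v v"
  define c where "c = v \<bullet> w"
  have c0: "c > 0" using pos[OF v0] by (simp add: c_def w_def)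
  define T' where "T' = T \<inter> {x. w \<bullet> x = 0}"
  have sT': "subspace T'"
    unfolding T'_def by (intro subspace_inter Suc.prems subspace_hyperplane)
  have vnot: "v \<notin> span T'"
    using sT' c0 by (simp add: span_eq_iff[THEN iffD2] T'_def c_def inner_commute)
  have "dim (insert v T') \<le> dim T"
    using vT Suc.prems by (intro dim_subset) (auto simp: T'_def)
  then have le1: "dim T' \<le> k"
    using vnot Suc.hyps(2) by (simp add: dim_insert)
  have "T \<subseteq> span (insert v T')"
  proof
    fix x assume xT: "x \<in> T"
    have "x - ((w \<bullet> x) / c) *\<^sub>R v \<in> T'"
      unfolding T'_def using xT vT Suc.prems c0
      by (auto simp: subspace_diff subspace_scale inner_diff_right c_def inner_commute)
    then show "x \<in> span (insert v T')"
      unfolding span_insert using span_base by blast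
  qed
  then have "dim T \<le> dim (insert v T')"
    by (metis dim_span dim_subset)
  then have le2: "k \<le> dim T'"
    using vnot Suc.hyps(2) by (simp add: dim_insert)
  obtain C' where C': "C' \<subseteq> T'" "finite C'" "card C' = dim T'"
     "\<forall>u\<in>C'. \<forall>v\<in>C'. u \<bullet> (S *v v) = (if u = v then 1 else 0)"
    using Suc.hyps(1)[of T'] le1 le2 sT' by auto
  define v' where "v' = (1 / sqrt c) *\<^sub>R v"
  have wv': "w \<bullet> v' = sqrt c"
    using c0 by (simp add: v'_def c_def inner_commute real_div_sqrt)
  have v'C: "v' \<notin> C'"
    using C'(1) wv' c0 by (auto simp: T'_def)
  have orth: "u \<bullet> (S *v v') = 0" if "u \<in> C'" for u
  proof -
    have "w \<bullet> u = 0" using that C'(1) by (auto simp: T'_def)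
    then show ?thesis
      by (simp add: v'_def matrix_vector_mult_scaleR w_def[symmetric] inner_commute)
  qed
  have vv: "v' \<bullet> (S *v v') = 1"
    using c0 by (simp add: v'_def matrix_vector_mult_scaleR w_def[symmetric] c_def[symmetric]
        power2_eq_square[symmetric])
  show ?case
  proof (intro exI[of _ "insert v' C'"] conjI)
    show "insert v' C' \<subseteq> T"
      using C'(1) vT Suc.prems by (auto simp: T'_def v'_def subspace_scale)
    show "finite (insert v' C')" using C' by simp
    show "card (insert v' C') = dim T"
      using C' v'C le1 le2 Suc.hyps(2) by simp
    show "\<forall>u\<in>insert v' C'. \<forall>x\<in>insert v' C'. u \<bullet> (S *v x) = (if u = x then 1 else 0)"
      using C'(4) orth vv v'C quad_sym[OF sym] by (metis insert_iff)
  qed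
qed

lemma sym_posdef_factor:
  fixes S :: "real^'n^'n"
  assumes "sym_posdef S"
  shows "\<exists>M::real^'n^'n. transpose M ** S ** M = mat 1"
proof -
  have sym: "transpose S = S" and pos: "\<And>x. x \<noteq> 0 \<Longrightarrow> x \<bullet> (S *v x) > 0"
    using assms by (auto simp: sym_posdef_def)
  obtain C where C: "finite C" "card C = CARD('n)"
     "\<forall>u\<in>C. \<forall>v\<in>C. u \<bullet> (S *v v) = (if u = v then 1 else 0)"
    using aorth_basis[OF sym pos, of UNIV] by (auto simp: dim_UNIV)
  obtain g where g: "bij_betw g (UNIV::'n set) C"
    using finite_same_card_bij[of "UNIV::'n set" C] C by auto
  define M where "M = (\<chi> i j. g j $ i)"
  have "(transpose M ** S ** M) $ i $ j = (\<Sum>l\<in>UNIV. \<Sum>k\<in>UNIV. g i $ k * S $ k $ l * g j $ l)" for i j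
    by (simp add: M_def matrix_matrix_mult_def transpose_def sum_distrib_right)
  also have "\<dots> i j = (\<Sum>k\<in>UNIV. \<Sum>l\<in>UNIV. g i $ k * S $ k $ l * g j $ l)" for i j
    by (rule sum.swap)
  also have "\<dots> i j = g i \<bullet> (S *v g j)" for i j
    by (simp add: inner_vec_def matrix_vector_mult_def sum_distrib_left mult.assoc)
  also have "g i \<bullet> (S *v g j) = (if i = j then 1 else 0)" for i j
    using C(3) g by (auto simp: bij_betw_def inj_on_def)
  finally have e: "\<And>i j. (transpose M ** S ** M) $ i $ j = (if i = j then 1 else 0)" .
  have "\<forall>i j. (transpose M ** S ** M) $ i $ j = mat 1 $ i $ j"
    using e by (simp add: mat_def)
  then have "transpose M ** S ** M = mat 1"
    by (simp add: vec_eq_iff)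
  then show ?thesis by blast
qed


lemma integral_lborel_prod:
  fixes f :: "'a::euclidean_space \<Rightarrow> real \<Rightarrow> real"
  assumes int: "\<And>b. b \<in> Basis \<Longrightarrow> integrable lborel (f b)"
  shows "integrable lborel (\<lambda>x. \<Prod>b\<in>Basis. f b (x \<bullet> b))"
    and "(\<integral>x. (\<Prod>b\<in>Basis. f b (x \<bullet> b)) \<partial>lborel) = (\<Prod>b\<in>Basis. integral\<^sup>L lborel (f b))"
proof -
  have [measurable]: "f b \<in> borel_measurable borel" if "b \<in> Basis" for b
    using int[OF that] by auto
  interpret product_sigma_finite "\<lambda>_::'a. lborel :: real measure"
    by (simp add: product_sigma_finite_def lborel.sigma_finite_measure_axioms)
  let ?T = "\<lambda>g. \<Sum>b\<in>Basis. g b *\<^sub>R b :: 'a"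
  have T[measurable]: "?T \<in> measurable (\<Pi>\<^sub>M b\<in>Basis. lborel) borel"
    by measurable
  have eq: "(\<Prod>b\<in>Basis. f b (?T g \<bullet> b)) = (\<Prod>b\<in>Basis. f b (g b))" for g
    by (intro prod.cong refl) (simp add: inner_sum_left inner_Basis if_distrib sum.delta cong: if_cong)
  have fm: "(\<lambda>x. \<Prod>b\<in>Basis. f b (x \<bullet> b)) \<in> borel_measurable borel"
    by measurable
  have i1: "integrable (\<Pi>\<^sub>M b\<in>Basis. lborel) (\<lambda>g. \<Prod>b\<in>Basis. f b (g b))"
    by (rule product_integrable_prod) (auto intro: int)
  show "integrable lborel (\<lambda>x. \<Prod>b\<in>Basis. f b (x \<bullet> b))"
    apply (subst lborel_eq)
    apply (subst integrable_distr_eq[OF T fm])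
    using i1 by (simp add: eq)
  show "(\<integral>x. (\<Prod>b\<in>Basis. f b (x \<bullet> b)) \<partial>lborel) = (\<Prod>b\<in>Basis. integral\<^sup>L lborel (f b))"
    apply (subst lborel_eq)
    apply (subst integral_distr[OF T fm])
    using product_integral_prod[of Basis f] int by (simp add: eq o_def)
qed

lemma Basis_vec_axis: "(Basis :: (real^'n) set) = range (\<lambda>i. axis i 1)"
  by (auto simp: Basis_vec_def)

lemma prod_Basis_vec:
  "(\<Prod>b\<in>(Basis::(real^'n) set). F b) = (\<Prod>i\<in>UNIV. F (axis i 1))"
  unfolding Basis_vec_axis
  by (subst prod.reindex) (auto simp: inj_on_def axis_eq_axis)

lemma integral_vec_prod:
  fixes g :: "'n::finite \<Rightarrow> real \<Rightarrow> real"
  assumes int: "\<And>i. integrable lborel (g i)"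
  shows "integrable lborel (\<lambda>x::real^'n. \<Prod>i\<in>UNIV. g i (x $ i))"
    and "(\<integral>x. (\<Prod>i\<in>UNIV. g i (x $ i)) \<partial>(lborel :: (real^'n) measure)) = (\<Prod>i\<in>UNIV. integral\<^sup>L lborel (g i))"
proof -
  define f where "f b = g (SOME i. b = axis i (1::real))" for b :: "real^'n"
  have fa: "f (axis i 1) = g i" for i
    unfolding f_def by (rule arg_cong[where f=g]) (auto simp: axis_eq_axis)
  have intf: "integrable lborel (f b)" if "b \<in> Basis" for b
    using that int by (auto simp: Basis_vec_axis fa)
  have e1: "(\<Prod>b\<in>Basis. f b (x \<bullet> b)) = (\<Prod>i\<in>UNIV. g i (x $ i))" for x :: "real^'n"
    by (simp add: prod_Basis_vec fa inner_axis)
  have e2: "(\<Prod>b\<in>(Basis::(real^'n) set). integral\<^sup>L lborel (f b)) = (\<Prod>i\<in>UNIV. integral\<^sup>L lborel (g i))"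
    by (simp add: prod_Basis_vec fa)
  show "integrable lborel (\<lambda>x::real^'n. \<Prod>i\<in>UNIV. g i (x $ i))"
    using integral_lborel_prod(1)[of f, OF intf] by (simp add: e1)
  show "(\<integral>x. (\<Prod>i\<in>UNIV. g i (x $ i)) \<partial>(lborel :: (real^'n) measure)) = (\<Prod>i\<in>UNIV. integral\<^sup>L lborel (g i))"
    using integral_lborel_prod(2)[of f, OF intf] by (simp add: e1 e2)
qed


definition gdens :: "real^'n \<Rightarrow> real" where
  "gdens z = (\<Prod>i\<in>UNIV. std_normal_density (z $ i))"

definition mom :: "nat \<Rightarrow> real" where
  "mom k = integral\<^sup>L lborel (\<lambda>t. std_normal_density t * t ^ k)"

lemma gmom:
  fixes k :: "'n::finite \<Rightarrow> nat"
  shows "integrable lborel (\<lambda>z::real^'n. gdens z * (\<Prod>i\<in>UNIV. (z $ i) ^ k i))"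
    and "(\<integral>z. gdens z * (\<Prod>i\<in>UNIV. (z $ i) ^ k i) \<partial>(lborel::(real^'n) measure)) = (\<Prod>i\<in>UNIV. mom (k i))"
proof -
  have e: "gdens z * (\<Prod>i\<in>UNIV. (z $ i) ^ k i) = (\<Prod>i\<in>UNIV. (\<lambda>t. std_normal_density t * t ^ k i) (z $ i))"
    for z :: "real^'n"
    by (simp add: gdens_def prod.distrib)
  show "integrable lborel (\<lambda>z::real^'n. gdens z * (\<Prod>i\<in>UNIV. (z $ i) ^ k i))"
    unfolding e by (rule integral_vec_prod(1)) (rule integrable_std_normal_moment)
  show "(\<integral>z. gdens z * (\<Prod>i\<in>UNIV. (z $ i) ^ k i) \<partial>(lborel::(real^'n) measure)) = (\<Prod>i\<in>UNIV. mom (k i))"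
    unfolding e by (subst integral_vec_prod(2)) (auto simp: mom_def integrable_std_normal_moment)
qed

lemma mom_0: "mom 0 = 1"
  using integral_std_normal_moment_even[of 0] by (simp add: mom_def)
lemma mom_1: "mom 1 = 0"
  using integral_std_normal_moment_odd[of 0] by (simp add: mom_def)
lemma mom_2: "mom 2 = 1"
  using integral_std_normal_moment_even[of 1] by (simp add: mom_def)
lemma mom_3: "mom 3 = 0"
  using integral_std_normal_moment_odd[of 1] by (simp add: mom_def numeral_3_eq_3)
lemma mom_4: "mom 4 = 3"
proof -
  have "mom (2*2) = fact (2 * 2) / (2^2 * fact 2)"
    using integral_std_normal_moment_even[of 2] by (simp add: mom_def)
  then show ?thesis by (simp add: fact_numeral)
qed

lemma mom_Suc:
  "mom (Suc 0) = 0" "mom (Suc (Suc 0)) = 1" "mom (Suc (Suc (Suc 0))) = 0" "mom (Suc (Suc (Suc (Suc 0)))) = 3"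
  using mom_1 mom_2 mom_3 mom_4 by (simp_all add: eval_nat_numeral)

lemma prod_univ_supp:
  fixes h :: "'n::finite \<Rightarrow> real"
  assumes "\<And>i. i \<notin> S \<Longrightarrow> h i = 1"
  shows "(\<Prod>i\<in>UNIV. h i) = (\<Prod>i\<in>S. h i)"
  using assms by (intro prod.mono_neutral_right) auto

lemma pow_indic: "(x::real) ^ (if P then 1 else 0) = (if P then x else 1)"
  by simp

lemma prod_indic: "(\<Prod>i\<in>UNIV. (z $ i :: real) ^ (if i = a then 1 else 0)) = z $ a"
  by (simp add: pow_indic prod.delta)

lemma mono2: "(\<Prod>i\<in>UNIV. (z $ i :: real) ^ ((if i = a then 1 else 0) + (if i = b then 1 else 0))) = z $ a * z $ b"
  by (simp add: power_add prod.distrib prod_indic del: power.simps)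

lemma mono4: "(\<Prod>i\<in>UNIV. (z $ i :: real) ^ ((if i = a then 1 else 0) + (if i = b then 1 else 0)
      + (if i = c then 1 else 0) + (if i = d then 1 else 0))) = z $ a * z $ b * z $ c * z $ d"
  by (simp add: power_add prod.distrib prod_indic del: power.simps)

lemma gmom2:
  fixes a b :: "'n::finite"
  shows "integrable lborel (\<lambda>z::real^'n. gdens z * (z $ a * z $ b))"
    and "(\<integral>z. gdens z * (z $ a * z $ b) \<partial>(lborel::(real^'n) measure)) = (if a = b then 1 else 0)"
proof -
  let ?k = "\<lambda>i. (if i = a then 1 else 0) + (if i = b then (1::nat) else 0)"
  show "integrable lborel (\<lambda>z::real^'n. gdens z * (z $ a * z $ b))"
    using gmom(1)[of ?k] by (simp only: mono2)
  have "(\<integral>z. gdens z * (z $ a * z $ b) \<partial>(lborel::(real^'n) measure)) = (\<Prod>i\<in>UNIV. mom (?k i))"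
    using gmom(2)[of ?k] by (simp only: mono2)
  also have "\<dots> = (\<Prod>i\<in>{a,b}. mom (?k i))"
    by (rule prod_univ_supp) (auto simp: mom_0)
  also have "\<dots> = (if a = b then 1 else 0)"
    by (cases "a = b") (simp_all add: mom_Suc)
  finally show "(\<integral>z. gdens z * (z $ a * z $ b) \<partial>(lborel::(real^'n) measure)) = (if a = b then 1 else 0)" .
qed

definition d4 :: "'n \<Rightarrow> 'n \<Rightarrow> 'n \<Rightarrow> 'n \<Rightarrow> real" where
  "d4 a b c d = (if a = b \<and> c = d then 1 else 0) + (if a = c \<and> b = d then 1 else 0) + (if a = d \<and> b = c then 1 else 0)"

lemma gmom4:
  fixes a b c d :: "'n::finite"
  shows "integrable lborel (\<lambda>z::real^'n. gdens z * (z $ a * z $ b * z $ c * z $ d))"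
    and "(\<integral>z. gdens z * (z $ a * z $ b * z $ c * z $ d) \<partial>(lborel::(real^'n) measure)) = d4 a b c d"
proof -
  let ?k = "\<lambda>i. (if i = a then 1 else 0) + (if i = b then 1 else 0) + (if i = c then 1 else 0) + (if i = d then (1::nat) else 0)"
  show "integrable lborel (\<lambda>z::real^'n. gdens z * (z $ a * z $ b * z $ c * z $ d))"
    using gmom(1)[of ?k] by (simp only: mono4)
  have "(\<integral>z. gdens z * (z $ a * z $ b * z $ c * z $ d) \<partial>(lborel::(real^'n) measure)) = (\<Prod>i\<in>UNIV. mom (?k i))"
    using gmom(2)[of ?k] by (simp only: mono4)
  also have "\<dots> = (\<Prod>i\<in>{a,b,c,d}. mom (?k i))"
    by (rule prod_univ_supp) (auto simp: mom_0)
  also have "\<dots> = d4 a b c d"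
    by (cases "a = b"; cases "a = c"; cases "a = d"; cases "b = c"; cases "b = d"; cases "c = d")
       (simp_all add: mom_Suc d4_def insert_commute)
  finally show "(\<integral>z. gdens z * (z $ a * z $ b * z $ c * z $ d) \<partial>(lborel::(real^'n) measure)) = d4 a b c d" .
qed


lemma posdef_inj:
  assumes "sym_posdef S" "S *v x = 0" shows "x = 0"
  using assms unfolding sym_posdef_def by (metis inner_zero_right less_irrefl)

lemma posdef_invertible:
  fixes S :: "real^'n^'n"
  assumes "sym_posdef S" shows "invertible S"
proof -
  have "\<exists>B::real^'n^'n. B ** S = mat 1"
    using posdef_inj[OF assms] matrix_left_invertible_ker by blast
  then show ?thesis using invertible_left_inverse by blast
qed

lemma matrix_inv_props:
  fixes S :: "real^'n^'n"
  assumes "invertible S"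
  shows "S ** matrix_inv S = mat 1" "matrix_inv S ** S = mat 1"
proof -
  have "S ** matrix_inv S = mat 1 \<and> matrix_inv S ** S = mat 1"
    using assms unfolding invertible_def matrix_inv_def by (rule someI_ex)
  then show "S ** matrix_inv S = mat 1" "matrix_inv S ** S = mat 1" by auto
qed

lemma inv_sym_posdef:
  fixes S :: "real^'n^'n"
  assumes sp: "sym_posdef S"
  shows "sym_posdef (matrix_inv S)"
proof -
  let ?A = "matrix_inv S"
  have inv: "invertible S" by (rule posdef_invertible[OF sp])
  note I = matrix_inv_props[OF inv]
  have ST: "transpose S = S" using sp by (simp add: sym_posdef_def)
  have "transpose ?A ** S = mat 1"
    using I(1) by (metis ST matrix_transpose_mul transpose_mat)
  then have "transpose ?A = transpose ?A ** (S ** ?A)"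
    using I(1) by simp
  also have "\<dots> = ?A" using \<open>transpose ?A ** S = mat 1\<close> by (simp add: matrix_mul_assoc)
  finally have sym: "transpose ?A = ?A" .
  have pos: "x \<bullet> (?A *v x) > 0" if "x \<noteq> 0" for x
  proof -
    let ?y = "?A *v x"
    have Sy: "S *v ?y = x" using I(1) by (simp add: matrix_vector_mul_assoc)
    have "?y \<noteq> 0" using Sy that by auto
    then have "?y \<bullet> (S *v ?y) > 0" using sp by (simp add: sym_posdef_def)
    then show ?thesis using Sy by (simp add: inner_commute)
  qed
  show ?thesis using sym pos by (simp add: sym_posdef_def)
qed

lemma factor_inv:
  fixes Sig :: "real^'n^'n"
  assumes sp: "sym_posdef Sig"
  shows "\<exists>N::real^'n^'n. transpose N ** matrix_inv Sig ** N = mat 1 \<and> N ** transpose N = Sig"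
proof -
  let ?A = "matrix_inv Sig"
  obtain N :: "real^'n^'n" where N: "transpose N ** ?A ** N = mat 1"
    using sym_posdef_factor[OF inv_sym_posdef[OF sp]] by blast
  have N2: "N ** (transpose N ** ?A) = mat 1"
    using N matrix_left_right_inverse by blast
  have AS: "?A ** Sig = mat 1" using matrix_inv_props[OF posdef_invertible[OF sp]] by simp
  have "N ** transpose N = N ** transpose N ** (?A ** Sig)" by (simp add: AS)
  also have "\<dots> = (N ** (transpose N ** ?A)) ** Sig" by (simp add: matrix_mul_assoc)
  also have "\<dots> = Sig" by (simp add: N2)
  finally show ?thesis using N by blast
qed

lemma quad_N:
  fixes N A :: "real^'n^'n"
  assumes "transpose N ** A ** N = mat 1"
  shows "(N *v z) \<bullet> (A *v (N *v z)) = z \<bullet> z"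
proof -
  have "(N *v z) \<bullet> (A *v (N *v z)) = z \<bullet> (transpose N *v (A *v (N *v z)))"
    using dot_lmul_matrix[of z "transpose N"] by simp
  also have "transpose N *v (A *v (N *v z)) = (transpose N ** A ** N) *v z"
    by (simp add: matrix_vector_mul_assoc matrix_mul_assoc)
  finally show ?thesis using assms by simp
qed

lemma gdens_formula:
  "gdens (z::real^'n) = (1 / sqrt (2 * pi)) ^ CARD('n) * exp (- (z \<bullet> z) / 2)"
proof -
  have "gdens z = (\<Prod>i\<in>UNIV. (1 / sqrt (2 * pi)) * exp (- (z $ i)\<^sup>2 / 2))"
    by (simp add: gdens_def std_normal_density_def)
  also have "\<dots> = (1 / sqrt (2 * pi)) ^ CARD('n) * exp (\<Sum>i\<in>UNIV. - (z $ i)\<^sup>2 / 2)"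
    by (simp only: prod.distrib prod_constant) (simp add: exp_sum)
  also have "(\<Sum>i\<in>UNIV. - (z $ i)\<^sup>2 / 2) = - (z \<bullet> z) / 2"
    by (simp add: inner_vec_def power2_eq_square sum_divide_distrib sum_negf)
  finally show ?thesis .
qed

lemma cv_lborel:
  fixes f :: "real^'n \<Rightarrow> real^'n" and F :: "real^'n \<Rightarrow> real"
  assumes lf: "linear f" and df: "det (matrix f) \<noteq> 0" and Fm: "F \<in> borel_measurable borel"
  shows "integrable lborel F \<longleftrightarrow> integrable lborel (\<lambda>z. \<bar>det (matrix f)\<bar> * F (f z))"
    and "integral\<^sup>L lborel F = (\<integral>z. \<bar>det (matrix f)\<bar> * F (f z) \<partial>lborel)"
proof -
  let ?c = "\<bar>det (matrix f)\<bar>"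
  let ?D = "density (distr lborel borel f) (\<lambda>_. ennreal ?c)"
  note Fm[measurable]
  have fm[measurable]: "f \<in> borel \<rightarrow>\<^sub>M borel"
    using lf by (simp add: borel_measurable_continuous_onI linear_continuous_on linear_linear)
  have fm': "f \<in> lborel \<rightarrow>\<^sub>M borel" using fm by simp
  have e: "lborel = ?D" by (rule lborel_linear_density[OF lf df])
  have "integrable lborel F \<longleftrightarrow> integrable ?D F"
    using e by (rule arg_cong[where f="\<lambda>M. integrable M F"])
  also have "\<dots> \<longleftrightarrow> integrable (distr lborel borel f) (\<lambda>x. ?c *\<^sub>R F x)"
    by (rule integrable_density) (auto simp: Fm)
  also have "\<dots> \<longleftrightarrow> integrable lborel (\<lambda>z. ?c * F (f z))"
    by (subst integrable_distr_eq[OF fm']) (auto simp: Fm intro: borel_measurable_times)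
  finally show "integrable lborel F \<longleftrightarrow> integrable lborel (\<lambda>z. ?c * F (f z))" .
  have "integral\<^sup>L lborel F = integral\<^sup>L ?D F"
    using e by (rule arg_cong[where f="\<lambda>M. integral\<^sup>L M F"])
  also have "\<dots> = integral\<^sup>L (distr lborel borel f) (\<lambda>x. ?c *\<^sub>R F x)"
    by (rule integral_density) (auto simp: Fm)
  also have "\<dots> = (\<integral>z. ?c * F (f z) \<partial>lborel)"
    by (subst integral_distr[OF fm']) (auto simp: Fm intro: borel_measurable_times)
  finally show "integral\<^sup>L lborel F = (\<integral>z. ?c * F (f z) \<partial>lborel)" .
qed


lemma gdens_int1:
  "integrable lborel (\<lambda>z::real^'n. gdens z * 1)" "(\<integral>z. gdens z * 1 \<partial>(lborel::(real^'n) measure)) = 1"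
  using gmom[of "\<lambda>_. 0"] by (simp_all add: mom_0)

lemma mvn_transfer:
  fixes Sig N :: "real^'p^'p" and Y :: "'a \<Rightarrow> real^'p" and g :: "real^'p \<Rightarrow> real"
  assumes ps: "prob_space M" and sp: "sym_posdef Sig"
    and dY: "distributed M lborel Y (mvn_density Sig)"
    and NA: "transpose N ** matrix_inv Sig ** N = mat 1"
    and gm: "g \<in> borel_measurable borel"
    and gi: "integrable lborel (\<lambda>z. gdens z * g (N *v z))"
  shows "integrable M (\<lambda>\<omega>. g (Y \<omega>))"
    and "prob_space.expectation M (\<lambda>\<omega>. g (Y \<omega>)) = (\<integral>z. gdens z * g (N *v z) \<partial>lborel)"
proof -
  interpret prob_space M by (rule ps)
  define A where "A = matrix_inv Sig"
  define m0 where "m0 = (2 * pi) powr (- real CARD('p) / 2) * det Sig powr (-1/2)"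
  define mvr where "mvr x = m0 * exp (- (x \<bullet> (A *v x)) / 2)" for x :: "real^'p"
  have m0: "m0 \<ge> 0" by (simp add: m0_def)
  have mvr_nn: "mvr x \<ge> 0" for x using m0 by (simp add: mvr_def)
  have md: "mvn_density Sig = (\<lambda>x. ennreal (mvr x))"
    by (simp add: fun_eq_iff mvn_density_def mvr_def m0_def A_def)
  have dY': "distributed M lborel Y (\<lambda>x. ennreal (mvr x))" using dY md by simp
  have mvrm[measurable]: "mvr \<in> borel_measurable borel"
    using distributed_real_measurable[OF _ dY'] mvr_nn by simp
  have dN: "det N \<noteq> 0"
  proof
    assume "det N = 0"
    then have "det (transpose N ** A ** N) = 0" by (simp add: det_mul)
    then show False using NA by (simp add: A_def)
  qed
  let ?T = "\<lambda>z. N *v z"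
  have lT: "linear ?T" by (simp add: matrix_vector_mul_linear)
  have mT: "matrix ?T = N" by simp
  have Tm[measurable]: "?T \<in> borel_measurable borel"
    using lT by (simp add: borel_measurable_continuous_onI linear_continuous_on linear_linear)
  define c1 where "c1 = (1 / sqrt (2 * pi)) ^ CARD('p)"
  have c1: "c1 > 0" by (simp add: c1_def)
  define K where "K = \<bar>det N\<bar> * m0 / c1"
  have mvrN: "\<bar>det N\<bar> * mvr (N *v z) = K * gdens z" for z
    using c1 quad_N[OF NA[folded A_def], of z]
    by (simp add: mvr_def K_def gdens_formula c1_def[symmetric])
  have key: "integrable M (\<lambda>\<omega>. h (Y \<omega>)) \<and> expectation (\<lambda>\<omega>. h (Y \<omega>)) = K * (\<integral>z. gdens z * h (N *v z) \<partial>lborel)"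
    if hm[measurable]: "h \<in> borel_measurable borel" and hi: "integrable lborel (\<lambda>z. gdens z * h (N *v z))" for h
  proof -
    have Fm: "(\<lambda>x. mvr x * h x) \<in> borel_measurable borel" by measurable
    have hm': "h \<in> borel_measurable lborel" using hm by simp
    have eqf: "(\<lambda>z. \<bar>det (matrix ?T)\<bar> * (mvr (N *v z) * h (N *v z))) = (\<lambda>z. K * (gdens z * h (N *v z)))"
      by (simp add: fun_eq_iff mvrN[symmetric] mult.assoc)
    have "integrable lborel (\<lambda>z. \<bar>det (matrix ?T)\<bar> * (mvr (N *v z) * h (N *v z)))"
      unfolding eqf by (rule integrable_mult_right[OF hi])
    then have "integrable lborel (\<lambda>x. mvr x * h x)"
      using cv_lborel(1)[OF lT _ Fm] dN by (simp only: mT) blast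
    then have I: "integrable M (\<lambda>\<omega>. h (Y \<omega>))"
      using distributed_integrable[OF dY' hm'] mvr_nn by simp
    have "expectation (\<lambda>\<omega>. h (Y \<omega>)) = (\<integral>x. mvr x * h x \<partial>lborel)"
      using distributed_integral[OF dY' hm'] mvr_nn by simp
    also have "\<dots> = (\<integral>z. \<bar>det (matrix ?T)\<bar> * (mvr (N *v z) * h (N *v z)) \<partial>lborel)"
      using cv_lborel(2)[OF lT _ Fm] dN by (simp only: mT) simp
    also have "\<dots> = (\<integral>z. K * (gdens z * h (N *v z)) \<partial>lborel)"
      by (simp only: eqf)
    also have "\<dots> = K * (\<integral>z. gdens z * h (N *v z) \<partial>lborel)"
      by simp
    finally show ?thesis using I by simp
  qed
  have i1: "integrable lborel (\<lambda>z. gdens z * (\<lambda>_. 1::real) (N *v z))"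
    using gdens_int1 by simp
  have "expectation (\<lambda>\<omega>. (\<lambda>_. 1::real) (Y \<omega>)) = K * (\<integral>z. gdens z * (\<lambda>_. 1::real) (N *v z) \<partial>lborel)"
    using key[OF _ i1] by simp
  moreover have "(\<integral>z. gdens z * (\<lambda>_. 1::real) (N *v z) \<partial>lborel) = 1"
    using gdens_int1 by simp
  moreover have "expectation (\<lambda>\<omega>. (\<lambda>_. 1::real) (Y \<omega>)) = 1"
    using prob_space by simp
  ultimately have K1: "K = 1" by simp
  show "integrable M (\<lambda>\<omega>. g (Y \<omega>))" using key[OF gm gi] by simp
  show "expectation (\<lambda>\<omega>. g (Y \<omega>)) = (\<integral>z. gdens z * g (N *v z) \<partial>lborel)"
    using key[OF gm gi] K1 by simp
qed


lemma sum_if_const: "(\<Sum>x\<in>A. if P then f x else 0) = (if P then sum f A else (0::real))"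
  by simp

lemma sum4_d1:
  fixes w :: "'n::finite \<Rightarrow> 'n \<Rightarrow> 'n \<Rightarrow> 'n \<Rightarrow> real"
  shows "(\<Sum>e\<in>UNIV. \<Sum>f\<in>UNIV. \<Sum>g\<in>UNIV. \<Sum>h\<in>UNIV. w e f g h * (if e = f \<and> g = h then 1 else 0))
     = (\<Sum>e\<in>UNIV. \<Sum>g\<in>UNIV. w e e g g)"
proof -
  have "w e f g h * (if e = f \<and> g = h then 1 else 0) = (if h = g then (if f = e then w e f g h else 0) else 0)" for e f g h
    by auto
  then show ?thesis by (simp add: sum.delta sum_if_const cong: if_cong)
qed

lemma sum4_d2:
  fixes w :: "'n::finite \<Rightarrow> 'n \<Rightarrow> 'n \<Rightarrow> 'n \<Rightarrow> real"
  shows "(\<Sum>e\<in>UNIV. \<Sum>f\<in>UNIV. \<Sum>g\<in>UNIV. \<Sum>h\<in>UNIV. w e f g h * (if e = g \<and> f = h then 1 else 0))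
     = (\<Sum>e\<in>UNIV. \<Sum>f\<in>UNIV. w e f e f)"
proof -
  have "w e f g h * (if e = g \<and> f = h then 1 else 0) = (if h = f then (if g = e then w e f g h else 0) else 0)" for e f g h
    by auto
  then show ?thesis by (simp add: sum.delta sum_if_const cong: if_cong)
qed

lemma sum4_d3:
  fixes w :: "'n::finite \<Rightarrow> 'n \<Rightarrow> 'n \<Rightarrow> 'n \<Rightarrow> real"
  shows "(\<Sum>e\<in>UNIV. \<Sum>f\<in>UNIV. \<Sum>g\<in>UNIV. \<Sum>h\<in>UNIV. w e f g h * (if e = h \<and> f = g then 1 else 0))
     = (\<Sum>e\<in>UNIV. \<Sum>f\<in>UNIV. w e f f e)"
proof -
  have "w e f g h * (if e = h \<and> f = g then 1 else 0) = (if h = e then (if g = f then w e f g h else 0) else 0)" for e f g h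
    by auto
  then show ?thesis by (simp add: sum.delta sum_if_const cong: if_cong)
qed

lemma Nv: "(N *v z) $ a = (\<Sum>c\<in>UNIV. N $ a $ c * z $ c)"
  by (simp add: matrix_vector_mult_def)

lemma NNt: "(N ** transpose N) $ a $ b = (\<Sum>e\<in>UNIV. N $ a $ e * N $ b $ e)"
  by (simp add: matrix_matrix_mult_def transpose_def)

context
  fixes M :: "'a measure" and Sig :: "real^'p^'p" and Y :: "'a \<Rightarrow> real^'p"
  assumes ps: "prob_space M" and sp: "sym_posdef Sig"
    and dY: "distributed M lborel Y (mvn_density Sig)"
begin

lemma mvn_mom2:
  shows "integrable M (\<lambda>\<omega>. Y \<omega> $ a * Y \<omega> $ b)"
    and "prob_space.expectation M (\<lambda>\<omega>. Y \<omega> $ a * Y \<omega> $ b) = Sig $ a $ b"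
proof -
  obtain N :: "real^'p^'p" where NA: "transpose N ** matrix_inv Sig ** N = mat 1" and NS: "N ** transpose N = Sig"
    using factor_inv[OF sp] by blast
  let ?g = "\<lambda>x::real^'p. x $ a * x $ b"
  have gm: "?g \<in> borel_measurable borel" by measurable
  have e: "gdens z * ?g (N *v z) = (\<Sum>c\<in>UNIV. \<Sum>d\<in>UNIV. (N $ a $ c * N $ b $ d) * (gdens z * (z $ c * z $ d)))" for z
    apply (simp add: Nv sum_distrib_left sum_distrib_right mult_ac)
    apply (subst sum.swap)
    apply (simp add: mult_ac)
    done
  have gi: "integrable lborel (\<lambda>z. gdens z * ?g (N *v z))"
    unfolding e by (auto intro!: integrable_sum integrable_mult_right gmom2(1))
  have "prob_space.expectation M (\<lambda>\<omega>. ?g (Y \<omega>)) = (\<integral>z. gdens z * ?g (N *v z) \<partial>lborel)"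
    by (rule mvn_transfer(2)[OF ps sp dY NA gm gi])
  also have "\<dots> = (\<Sum>c\<in>UNIV. \<Sum>d\<in>UNIV. (N $ a $ c * N $ b $ d) * (if c = d then 1 else 0))"
    unfolding e by (simp add: integral_sum integrable_sum gmom2)
  also have "\<dots> = Sig $ a $ b"
    by (simp add: NS[symmetric] NNt if_distrib sum.delta cong: if_cong)
  finally show "prob_space.expectation M (\<lambda>\<omega>. Y \<omega> $ a * Y \<omega> $ b) = Sig $ a $ b" .
  show "integrable M (\<lambda>\<omega>. Y \<omega> $ a * Y \<omega> $ b)"
    by (rule mvn_transfer(1)[OF ps sp dY NA gm gi])
qed

lemma mvn_mom4:
  shows "integrable M (\<lambda>\<omega>. Y \<omega> $ a * Y \<omega> $ b * Y \<omega> $ c * Y \<omega> $ d)"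
    and "prob_space.expectation M (\<lambda>\<omega>. Y \<omega> $ a * Y \<omega> $ b * Y \<omega> $ c * Y \<omega> $ d)
       = Sig $ a $ b * Sig $ c $ d + Sig $ a $ c * Sig $ b $ d + Sig $ a $ d * Sig $ b $ c"
proof -
  obtain N :: "real^'p^'p" where NA: "transpose N ** matrix_inv Sig ** N = mat 1" and NS: "N ** transpose N = Sig"
    using factor_inv[OF sp] by blast
  let ?g = "\<lambda>x::real^'p. x $ a * x $ b * x $ c * x $ d"
  let ?w = "\<lambda>e f g h. N $ a $ e * N $ b $ f * N $ c $ g * N $ d $ h"
  have gm: "?g \<in> borel_measurable borel" by measurable
  have e: "gdens z * ?g (N *v z) = (\<Sum>e\<in>UNIV. \<Sum>f\<in>UNIV. \<Sum>g\<in>UNIV. \<Sum>h\<in>UNIV. ?w e f g h * (gdens z * (z $ e * z $ f * z $ g * z $ h)))" for z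
    apply (simp add: Nv sum_distrib_left sum_distrib_right mult_ac)
    apply (rule trans[OF sum.swap])
    apply (rule sum.cong[OF refl])
    apply (rule sum.cong[OF refl])
    apply (rule sum.cong[OF refl])
    apply (rule sum.cong[OF refl])
    apply (simp add: mult_ac)
    done
  have gi: "integrable lborel (\<lambda>z. gdens z * ?g (N *v z))"
    unfolding e
    apply (rule Bochner_Integration.integrable_sum)+
    apply (rule integrable_mult_right)
    apply (rule gmom4(1))
    done
  have "prob_space.expectation M (\<lambda>\<omega>. ?g (Y \<omega>)) = (\<integral>z. gdens z * ?g (N *v z) \<partial>lborel)"
    by (rule mvn_transfer(2)[OF ps sp dY NA gm gi])
  also have "\<dots> = (\<Sum>e\<in>UNIV. \<Sum>f\<in>UNIV. \<Sum>g\<in>UNIV. \<Sum>h\<in>UNIV. ?w e f g h * d4 e f g h)"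
    unfolding e by (simp add: integral_sum integrable_sum gmom4)
  also have "\<dots> = (\<Sum>e\<in>UNIV. \<Sum>g\<in>UNIV. ?w e e g g) + (\<Sum>e\<in>UNIV. \<Sum>f\<in>UNIV. ?w e f e f) + (\<Sum>e\<in>UNIV. \<Sum>f\<in>UNIV. ?w e f f e)"
    unfolding d4_def distrib_left sum.distrib sum4_d1 sum4_d2 sum4_d3 ..
  also have "\<dots> = Sig $ a $ b * Sig $ c $ d + Sig $ a $ c * Sig $ b $ d + Sig $ a $ d * Sig $ b $ c"
    apply (simp add: NS[symmetric] NNt sum_distrib_left sum_distrib_right mult_ac)
    apply (subst (1 2 3) sum.swap)
    apply (simp add: mult_ac)
    done
  finally show "prob_space.expectation M (\<lambda>\<omega>. Y \<omega> $ a * Y \<omega> $ b * Y \<omega> $ c * Y \<omega> $ d)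
       = Sig $ a $ b * Sig $ c $ d + Sig $ a $ c * Sig $ b $ d + Sig $ a $ d * Sig $ b $ c" .
  show "integrable M (\<lambda>\<omega>. Y \<omega> $ a * Y \<omega> $ b * Y \<omega> $ c * Y \<omega> $ d)"
    by (rule mvn_transfer(1)[OF ps sp dY NA gm gi])
qed

end


lemma st_entry: "shrink_target S $ a $ b = (if a = b then trace S / real CARD('n) else 0)"
  for S :: "real^'n^'n"
  by (simp add: shrink_target_def mat_def)

lemma trace_sum: "trace S = (\<Sum>a\<in>UNIV. S $ a $ a)"
  by (simp add: trace_def)

lemma sum_sq_delta:
  fixes x :: "'n::finite \<Rightarrow> 'n \<Rightarrow> real"
  shows "(\<Sum>a\<in>UNIV. \<Sum>b\<in>UNIV. (x a b - (if a = b then t else 0))\<^sup>2)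
    = (\<Sum>a\<in>UNIV. \<Sum>b\<in>UNIV. x a b * x a b) - 2 * t * (\<Sum>a\<in>UNIV. x a a) + real CARD('n) * t * t"
proof -
  have e: "(x a b - (if a = b then t else 0))\<^sup>2 = x a b * x a b - (if b = a then 2 * t * x a a - t * t else 0)" for a b
    by (auto simp: power2_eq_square algebra_simps)
  show ?thesis
    by (simp add: e sum_subtractf sum.delta sum_distrib_left[symmetric])
qed

lemma P1:
  fixes S :: "real^'n^'n"
  shows "frob_sq (S - shrink_target S) = (\<Sum>a\<in>UNIV. \<Sum>b\<in>UNIV. S$a$b * S$a$b) - (\<Sum>a\<in>UNIV. \<Sum>b\<in>UNIV. S$a$a * S$b$b) / real CARD('n)"
proof -
  let ?p = "real CARD('n)" and ?t = "trace S / real CARD('n)"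
  have "frob_sq (S - shrink_target S) = (\<Sum>a\<in>UNIV. \<Sum>b\<in>UNIV. (S$a$b - (if a = b then ?t else 0))\<^sup>2)"
    by (simp add: frob_sq_def st_entry)
  also have "\<dots> = (\<Sum>a\<in>UNIV. \<Sum>b\<in>UNIV. S$a$b * S$a$b) - 2 * ?t * trace S + ?p * ?t * ?t"
    by (simp add: sum_sq_delta trace_sum)
  finally have f: "frob_sq (S - shrink_target S) = (\<Sum>a\<in>UNIV. \<Sum>b\<in>UNIV. S$a$b * S$a$b) - 2 * ?t * trace S + ?p * ?t * ?t" .
  have h: "(\<Sum>a\<in>UNIV. \<Sum>b\<in>UNIV. S$a$a * S$b$b) = trace S * trace S"
    by (simp add: trace_sum sum_product)
  show ?thesis unfolding f h by (simp add: field_simps)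
qed

lemma P2:
  fixes S Sig :: "real^'n^'n"
  shows "trace ((Sig - S) ** (shrink_target S - S)) =
     (\<Sum>a\<in>UNIV. \<Sum>b\<in>UNIV. Sig$a$a * S$b$b) / real CARD('n) - (\<Sum>a\<in>UNIV. \<Sum>b\<in>UNIV. Sig$a$b * S$b$a)
     - (\<Sum>a\<in>UNIV. \<Sum>b\<in>UNIV. S$a$a * S$b$b) / real CARD('n) + (\<Sum>a\<in>UNIV. \<Sum>b\<in>UNIV. S$a$b * S$b$a)"
proof -
  let ?p = "real CARD('n)" and ?t = "trace S / real CARD('n)"
  have "trace ((Sig - S) ** (shrink_target S - S)) = (\<Sum>a\<in>UNIV. \<Sum>b\<in>UNIV. (Sig$a$b - S$a$b) * ((if b = a then ?t else 0) - S$b$a))"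
    by (simp add: trace_sum matrix_matrix_mult_def st_entry)
  also have "\<dots> = (\<Sum>a\<in>UNIV. (Sig$a$a - S$a$a) * ?t) - (\<Sum>a\<in>UNIV. \<Sum>b\<in>UNIV. Sig$a$b * S$b$a) + (\<Sum>a\<in>UNIV. \<Sum>b\<in>UNIV. S$a$b * S$b$a)"
  proof -
    have e: "(Sig$a$b - S$a$b) * ((if b = a then ?t else 0) - S$b$a) = (if b = a then (Sig$a$a - S$a$a) * ?t else 0) - Sig$a$b * S$b$a + S$a$b * S$b$a" for a b
      by (auto simp: algebra_simps)
    show ?thesis by (simp add: e sum.distrib sum_subtractf sum.delta)
  qed
  finally have f: "trace ((Sig - S) ** (shrink_target S - S)) = (\<Sum>a\<in>UNIV. (Sig$a$a - S$a$a) * ?t) - (\<Sum>a\<in>UNIV. \<Sum>b\<in>UNIV. Sig$a$b * S$b$a) + (\<Sum>a\<in>UNIV. \<Sum>b\<in>UNIV. S$a$b * S$b$a)" .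
  have h1: "(\<Sum>a\<in>UNIV. (Sig$a$a - S$a$a) * ?t) = (trace Sig - trace S) * ?t"
    by (simp only: trace_sum sum_distrib_right[symmetric] sum_subtractf)
  have h2: "(\<Sum>a\<in>UNIV. \<Sum>b\<in>UNIV. Sig$a$a * S$b$b) = trace Sig * trace S"
    by (simp add: trace_sum sum_product)
  have h3: "(\<Sum>a\<in>UNIV. \<Sum>b\<in>UNIV. S$a$a * S$b$b) = trace S * trace S"
    by (simp add: trace_sum sum_product)
  show ?thesis unfolding f h1 h2 h3 by (simp add: field_simps)
qed

lemma st_sym: "transpose S = S \<Longrightarrow> (shrink_target S - S) $ b $ a = (shrink_target S - S) $ a $ b"
  for S :: "real^'n^'n"
proof -
  assume sym: "transpose S = S"
  have "S $ b $ a = S $ a $ b" using sym by (metis transpose_def vec_lambda_beta)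
  then show ?thesis by (auto simp: st_entry)
qed

lemma P3:
  fixes S Sig :: "real^'n^'n"
  assumes sym: "transpose S = S"
  shows "frob_sq ((1 - r) *\<^sub>R S + r *\<^sub>R shrink_target S - Sig) =
    frob_sq (S - Sig) - 2 * r * trace ((Sig - S) ** (shrink_target S - S)) + r\<^sup>2 * frob_sq (S - shrink_target S)"
proof -
  let ?U = "S - Sig" and ?V = "shrink_target S - S"
  have ent: "((1 - r) *\<^sub>R S + r *\<^sub>R shrink_target S - Sig) $ a $ b = ?U $ a $ b + r * ?V $ a $ b" for a b
    by (simp add: algebra_simps)
  have pw: "(Sig - S) $ a $ b * ?V $ b $ a = - (?U $ a $ b * ?V $ a $ b)" for a b
  proof -
    have "S $ b $ a = S $ a $ b" using sym by (metis transpose_def vec_lambda_beta)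
    moreover have "shrink_target S $ b $ a = shrink_target S $ a $ b" by (auto simp: st_entry)
    ultimately show ?thesis by (simp add: algebra_simps)
  qed
  have tr: "trace ((Sig - S) ** ?V) = - (\<Sum>a\<in>UNIV. \<Sum>b\<in>UNIV. ?U $ a $ b * ?V $ a $ b)"
    by (simp only: trace_sum matrix_matrix_mult_def vec_lambda_beta pw sum_negf)
  have fv: "frob_sq (S - shrink_target S) = (\<Sum>a\<in>UNIV. \<Sum>b\<in>UNIV. (?V $ a $ b)\<^sup>2)"
    by (simp add: frob_sq_def power2_commute)
  have "frob_sq ((1 - r) *\<^sub>R S + r *\<^sub>R shrink_target S - Sig)
     = (\<Sum>a\<in>UNIV. \<Sum>b\<in>UNIV. (?U $ a $ b)\<^sup>2 + 2 * r * (?U $ a $ b * ?V $ a $ b) + r\<^sup>2 * (?V $ a $ b)\<^sup>2)"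
    unfolding frob_sq_def ent by (simp add: power2_eq_square algebra_simps)
  also have "\<dots> = frob_sq (S - Sig) - 2 * r * trace ((Sig - S) ** ?V) + r\<^sup>2 * frob_sq (S - shrink_target S)"
  proof -
    have fu: "frob_sq (S - Sig) = (\<Sum>a\<in>UNIV. \<Sum>b\<in>UNIV. (?U $ a $ b)\<^sup>2)"
      by (simp add: frob_sq_def)
    show ?thesis by (simp only: tr fv fu sum.distrib sum_distrib_left) (simp add: sum_distrib_left)
  qed
  finally show ?thesis .
qed

lemma P4:
  fixes S Sig :: "real^'n^'n"
  shows "frob_sq (S - Sig) = (\<Sum>a\<in>UNIV. \<Sum>b\<in>UNIV. S$a$b * S$a$b - 2 * Sig$a$b * S$a$b + Sig$a$b * Sig$a$b)"
  by (simp add: frob_sq_def power2_eq_square algebra_simps)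


lemma sc_entry: "sample_cov n x $ a $ b = (\<Sum>i\<in>{1..n}. x i $ a * x i $ b) / real n"
  by (simp add: sample_cov_def outer_def)

lemma sc_sym: "transpose (sample_cov n x) = sample_cov n x"
  by (simp add: vec_eq_iff transpose_def sc_entry mult.commute)

lemma integral_sum2:
  fixes F :: "'i \<Rightarrow> 'j \<Rightarrow> 'a \<Rightarrow> real"
  assumes "\<And>i k. i \<in> A \<Longrightarrow> k \<in> B \<Longrightarrow> integrable M (F i k)"
  shows "integral\<^sup>L M (\<lambda>x. \<Sum>i\<in>A. \<Sum>k\<in>B. F i k x) = (\<Sum>i\<in>A. \<Sum>k\<in>B. integral\<^sup>L M (F i k))"
proof -
  have "integral\<^sup>L M (\<lambda>x. \<Sum>i\<in>A. \<Sum>k\<in>B. F i k x) = (\<Sum>i\<in>A. integral\<^sup>L M (\<lambda>x. \<Sum>k\<in>B. F i k x))"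
    by (rule Bochner_Integration.integral_sum) (use assms in \<open>auto intro!: Bochner_Integration.integrable_sum\<close>)
  also have "\<dots> = (\<Sum>i\<in>A. \<Sum>k\<in>B. integral\<^sup>L M (F i k))"
    by (intro sum.cong refl Bochner_Integration.integral_sum) (use assms in auto)
  finally show ?thesis .
qed

context
  fixes M :: "'a measure" and Sig :: "real^'p^'p" and n :: nat and X :: "nat \<Rightarrow> 'a \<Rightarrow> real^'p"
  assumes ps: "prob_space M" and n1: "n \<ge> 1" and sp: "sym_posdef Sig"
    and ind: "prob_space.indep_vars M (\<lambda>_. borel) X {1..n}"
    and dist: "\<And>i. i \<in> {1..n} \<Longrightarrow> distributed M lborel (X i) (mvn_density Sig)"
begin

lemma E4x:
  assumes i: "i \<in> {1..n}" and k: "k \<in> {1..n}"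
  shows "integrable M (\<lambda>\<omega>. (X i \<omega> $ a * X i \<omega> $ b) * (X k \<omega> $ c * X k \<omega> $ d))"
    and "integral\<^sup>L M (\<lambda>\<omega>. (X i \<omega> $ a * X i \<omega> $ b) * (X k \<omega> $ c * X k \<omega> $ d))
       = Sig $ a $ b * Sig $ c $ d + (if i = k then Sig $ a $ c * Sig $ b $ d + Sig $ a $ d * Sig $ b $ c else 0)"
proof -
  interpret prob_space M by (rule ps)
  have "integrable M (\<lambda>\<omega>. (X i \<omega> $ a * X i \<omega> $ b) * (X k \<omega> $ c * X k \<omega> $ d)) \<and>
    integral\<^sup>L M (\<lambda>\<omega>. (X i \<omega> $ a * X i \<omega> $ b) * (X k \<omega> $ c * X k \<omega> $ d))
       = Sig $ a $ b * Sig $ c $ d + (if i = k then Sig $ a $ c * Sig $ b $ d + Sig $ a $ d * Sig $ b $ c else 0)"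
  proof (cases "i = k")
    case True
    have h: "(\<lambda>\<omega>. (X i \<omega> $ a * X i \<omega> $ b) * (X i \<omega> $ c * X i \<omega> $ d)) = (\<lambda>\<omega>. X i \<omega> $ a * X i \<omega> $ b * X i \<omega> $ c * X i \<omega> $ d)"
      by (simp add: mult.assoc)
    show ?thesis
      using True mvn_mom4[OF ps sp dist[OF i], of a b c d] by (simp add: mult.assoc add.assoc)
  next
    case False
    define Y where "Y j x = (if j = i then x $ a * x $ b else x $ c * x $ d)" for j and x :: "real^'p"
    have Ym: "Y j \<in> borel_measurable borel" for j unfolding Y_def by measurable
    have ind2: "indep_vars (\<lambda>_. borel) (\<lambda>j \<omega>. Y j (X j \<omega>)) {i, k}"
      by (rule indep_vars_compose2[OF indep_vars_subset[OF ind]]) (use i k Ym in auto)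
    have intY: "integrable M (\<lambda>\<omega>. Y j (X j \<omega>))" if "j \<in> {i, k}" for j
      using that False mvn_mom2(1)[OF ps sp dist[OF i]] mvn_mom2(1)[OF ps sp dist[OF k]] by (auto simp: Y_def)
    have pe: "(\<Prod>j\<in>{i,k}. Y j (X j \<omega>)) = (X i \<omega> $ a * X i \<omega> $ b) * (X k \<omega> $ c * X k \<omega> $ d)" for \<omega>
      using False by (simp add: Y_def)
    have I: "integrable M (\<lambda>\<omega>. (\<Prod>j\<in>{i,k}. Y j (X j \<omega>)))"
      by (rule indep_vars_integrable[OF _ ind2 intY]) auto
    have E: "(\<integral>\<omega>. (\<Prod>j\<in>{i,k}. Y j (X j \<omega>)) \<partial>M) = (\<Prod>j\<in>{i,k}. \<integral>\<omega>. Y j (X j \<omega>) \<partial>M)"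
      by (rule indep_vars_lebesgue_integral[OF _ ind2 intY]) auto
    also have "\<dots> = Sig $ a $ b * Sig $ c $ d"
      using False mvn_mom2(2)[OF ps sp dist[OF i]] mvn_mom2(2)[OF ps sp dist[OF k]] by (simp add: Y_def)
    finally show ?thesis using I False unfolding pe by simp
  qed
  then show "integrable M (\<lambda>\<omega>. (X i \<omega> $ a * X i \<omega> $ b) * (X k \<omega> $ c * X k \<omega> $ d))"
    and "integral\<^sup>L M (\<lambda>\<omega>. (X i \<omega> $ a * X i \<omega> $ b) * (X k \<omega> $ c * X k \<omega> $ d))
       = Sig $ a $ b * Sig $ c $ d + (if i = k then Sig $ a $ c * Sig $ b $ d + Sig $ a $ d * Sig $ b $ c else 0)"
    by auto
qed

abbreviation S :: "'a \<Rightarrow> real^'p^'p" where "S \<omega> \<equiv> sample_cov n (\<lambda>i. X i \<omega>)"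

lemma KS1:
  shows "integrable M (\<lambda>\<omega>. S \<omega> $ a $ b)" and "integral\<^sup>L M (\<lambda>\<omega>. S \<omega> $ a $ b) = Sig $ a $ b"
proof -
  have i: "integrable M (\<lambda>\<omega>. X i \<omega> $ a * X i \<omega> $ b)" if "i \<in> {1..n}" for i
    using mvn_mom2(1)[OF ps sp dist[OF that]] .
  show "integrable M (\<lambda>\<omega>. S \<omega> $ a $ b)"
    unfolding sc_entry by (intro integrable_divide Bochner_Integration.integrable_sum i)
  have "integral\<^sup>L M (\<lambda>\<omega>. S \<omega> $ a $ b) = (\<Sum>i\<in>{1..n}. integral\<^sup>L M (\<lambda>\<omega>. X i \<omega> $ a * X i \<omega> $ b)) / real n"
    unfolding sc_entry by (simp add: integral_sum i)
  also have "\<dots> = (\<Sum>i\<in>{1..n}. Sig $ a $ b) / real n"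
    using mvn_mom2(2)[OF ps sp dist] by simp
  also have "\<dots> = Sig $ a $ b" using n1 by simp
  finally show "integral\<^sup>L M (\<lambda>\<omega>. S \<omega> $ a $ b) = Sig $ a $ b" .
qed

lemma KS2:
  shows "integrable M (\<lambda>\<omega>. S \<omega> $ a $ b * S \<omega> $ c $ d)"
    and "integral\<^sup>L M (\<lambda>\<omega>. S \<omega> $ a $ b * S \<omega> $ c $ d)
       = Sig $ a $ b * Sig $ c $ d + (Sig $ a $ c * Sig $ b $ d + Sig $ a $ d * Sig $ b $ c) / real n"
proof -
  have e: "S \<omega> $ a $ b * S \<omega> $ c $ d = (\<Sum>i\<in>{1..n}. \<Sum>k\<in>{1..n}. (X i \<omega> $ a * X i \<omega> $ b) * (X k \<omega> $ c * X k \<omega> $ d)) / (real n * real n)" for \<omega>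
    by (simp add: sc_entry sum_product)
  show "integrable M (\<lambda>\<omega>. S \<omega> $ a $ b * S \<omega> $ c $ d)"
    unfolding e by (intro integrable_divide Bochner_Integration.integrable_sum E4x(1)) auto
  let ?c = "Sig $ a $ c * Sig $ b $ d + Sig $ a $ d * Sig $ b $ c"
  have "integral\<^sup>L M (\<lambda>\<omega>. S \<omega> $ a $ b * S \<omega> $ c $ d)
      = (\<Sum>i\<in>{1..n}. \<Sum>k\<in>{1..n}. integral\<^sup>L M (\<lambda>\<omega>. (X i \<omega> $ a * X i \<omega> $ b) * (X k \<omega> $ c * X k \<omega> $ d))) / (real n * real n)"
    unfolding e by (subst integral_sum2[symmetric]) (auto intro: E4x(1))
  also have "\<dots> = (\<Sum>i\<in>{1..n}. \<Sum>k\<in>{1..n}. Sig $ a $ b * Sig $ c $ d + (if i = k then ?c else 0)) / (real n * real n)"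
    by (simp add: E4x(2))
  also have "\<dots> = (real n * real n * (Sig $ a $ b * Sig $ c $ d) + real n * ?c) / (real n * real n)"
    using n1 by (simp add: sum.distrib sum.delta field_simps)
  also have "\<dots> = Sig $ a $ b * Sig $ c $ d + ?c / real n"
    using n1 by (simp add: field_simps)
  finally show "integral\<^sup>L M (\<lambda>\<omega>. S \<omega> $ a $ b * S \<omega> $ c $ d)
       = Sig $ a $ b * Sig $ c $ d + ?c / real n" .
qed


lemma Sig_sym: "Sig $ b $ a = Sig $ a $ b"
  using sp unfolding sym_posdef_def by (metis transpose_def vec_lambda_beta)

lemma T2e: "trace (Sig ** Sig) = (\<Sum>a\<in>UNIV. \<Sum>b\<in>UNIV. Sig $ a $ b * Sig $ a $ b)"
  by (simp add: trace_sum matrix_matrix_mult_def Sig_sym[of _ a for a])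

lemma T2e': "(\<Sum>a\<in>UNIV. \<Sum>b\<in>UNIV. Sig $ a $ b * Sig $ b $ a) = trace (Sig ** Sig)"
  by (simp add: T2e Sig_sym[of a b for a b])

lemma T1sq: "(\<Sum>a\<in>UNIV. \<Sum>b\<in>UNIV. Sig $ a $ a * Sig $ b $ b) = trace Sig * trace Sig"
  unfolding trace_sum sum_product ..

lemma int2:
  assumes "\<And>a b. integrable M (f a b)"
  shows "integrable M (\<lambda>\<omega>. \<Sum>a\<in>UNIV. \<Sum>b\<in>UNIV. f a b \<omega>)"
    and "integral\<^sup>L M (\<lambda>\<omega>. \<Sum>a\<in>UNIV. \<Sum>b\<in>UNIV. f a b \<omega>) = (\<Sum>a\<in>UNIV. \<Sum>b\<in>UNIV. integral\<^sup>L M (f a b))"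
  using assms by (auto intro!: Bochner_Integration.integrable_sum integral_sum2)

lemma sum2_split: "(\<Sum>a\<in>UNIV. \<Sum>b\<in>UNIV. x a b + y a b / r) = (\<Sum>a\<in>UNIV. \<Sum>b\<in>UNIV. x a b) + (\<Sum>a\<in>UNIV. \<Sum>b\<in>UNIV. y a b) / (r::real)"
  by (simp add: sum.distrib sum_divide_distrib)

definition "T1 = trace Sig"
definition "T2 = trace (Sig ** Sig)"

lemma eSS:
  shows "integrable M (\<lambda>\<omega>. \<Sum>a\<in>UNIV. \<Sum>b\<in>UNIV. S \<omega> $ a $ b * S \<omega> $ a $ b)"
    and "integral\<^sup>L M (\<lambda>\<omega>. \<Sum>a\<in>UNIV. \<Sum>b\<in>UNIV. S \<omega> $ a $ b * S \<omega> $ a $ b) = T2 + (T1 * T1 + T2) / real n"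
proof -
  show "integrable M (\<lambda>\<omega>. \<Sum>a\<in>UNIV. \<Sum>b\<in>UNIV. S \<omega> $ a $ b * S \<omega> $ a $ b)"
    by (rule int2(1)) (rule KS2(1))
  have "integral\<^sup>L M (\<lambda>\<omega>. \<Sum>a\<in>UNIV. \<Sum>b\<in>UNIV. S \<omega> $ a $ b * S \<omega> $ a $ b)
     = (\<Sum>a\<in>UNIV. \<Sum>b\<in>UNIV. Sig $ a $ b * Sig $ a $ b + (Sig $ a $ a * Sig $ b $ b + Sig $ a $ b * Sig $ b $ a) / real n)"
    by (simp add: int2(2) KS2)
  also have "\<dots> = T2 + (T1 * T1 + T2) / real n"
    unfolding sum2_split by (simp add: sum.distrib T2e'[unfolded T2e] T1sq T1_def T2_def T2e)
  finally show "integral\<^sup>L M (\<lambda>\<omega>. \<Sum>a\<in>UNIV. \<Sum>b\<in>UNIV. S \<omega> $ a $ b * S \<omega> $ a $ b) = T2 + (T1 * T1 + T2) / real n" .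
qed

lemma eDD:
  shows "integrable M (\<lambda>\<omega>. \<Sum>a\<in>UNIV. \<Sum>b\<in>UNIV. S \<omega> $ a $ a * S \<omega> $ b $ b)"
    and "integral\<^sup>L M (\<lambda>\<omega>. \<Sum>a\<in>UNIV. \<Sum>b\<in>UNIV. S \<omega> $ a $ a * S \<omega> $ b $ b) = T1 * T1 + 2 * T2 / real n"
proof -
  show "integrable M (\<lambda>\<omega>. \<Sum>a\<in>UNIV. \<Sum>b\<in>UNIV. S \<omega> $ a $ a * S \<omega> $ b $ b)"
    by (rule int2(1)) (rule KS2(1))
  have "integral\<^sup>L M (\<lambda>\<omega>. \<Sum>a\<in>UNIV. \<Sum>b\<in>UNIV. S \<omega> $ a $ a * S \<omega> $ b $ b)
     = (\<Sum>a\<in>UNIV. \<Sum>b\<in>UNIV. Sig $ a $ a * Sig $ b $ b + (Sig $ a $ b * Sig $ a $ b + Sig $ a $ b * Sig $ a $ b) / real n)"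
    by (simp add: int2(2) KS2)
  also have "\<dots> = T1 * T1 + 2 * T2 / real n"
    unfolding sum2_split T1sq by (simp add: T1_def T2_def T2e sum_distrib_left[symmetric] sum.distrib)
  finally show "integral\<^sup>L M (\<lambda>\<omega>. \<Sum>a\<in>UNIV. \<Sum>b\<in>UNIV. S \<omega> $ a $ a * S \<omega> $ b $ b) = T1 * T1 + 2 * T2 / real n" .
qed

lemma eST:
  shows "integrable M (\<lambda>\<omega>. \<Sum>a\<in>UNIV. \<Sum>b\<in>UNIV. S \<omega> $ a $ b * S \<omega> $ b $ a)"
    and "integral\<^sup>L M (\<lambda>\<omega>. \<Sum>a\<in>UNIV. \<Sum>b\<in>UNIV. S \<omega> $ a $ b * S \<omega> $ b $ a) = T2 + (T2 + T1 * T1) / real n"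
proof -
  show "integrable M (\<lambda>\<omega>. \<Sum>a\<in>UNIV. \<Sum>b\<in>UNIV. S \<omega> $ a $ b * S \<omega> $ b $ a)"
    by (rule int2(1)) (rule KS2(1))
  have "integral\<^sup>L M (\<lambda>\<omega>. \<Sum>a\<in>UNIV. \<Sum>b\<in>UNIV. S \<omega> $ a $ b * S \<omega> $ b $ a)
     = (\<Sum>a\<in>UNIV. \<Sum>b\<in>UNIV. Sig $ a $ b * Sig $ b $ a + (Sig $ a $ b * Sig $ b $ a + Sig $ a $ a * Sig $ b $ b) / real n)"
    by (simp add: int2(2) KS2)
  also have "\<dots> = T2 + (T2 + T1 * T1) / real n"
    unfolding sum2_split by (simp add: sum.distrib T2e' T1sq T1_def T2_def)
  finally show "integral\<^sup>L M (\<lambda>\<omega>. \<Sum>a\<in>UNIV. \<Sum>b\<in>UNIV. S \<omega> $ a $ b * S \<omega> $ b $ a) = T2 + (T2 + T1 * T1) / real n" .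
qed

lemma eL1:
  shows "integrable M (\<lambda>\<omega>. \<Sum>a\<in>UNIV. \<Sum>b\<in>UNIV. Sig $ a $ a * S \<omega> $ b $ b)"
    and "integral\<^sup>L M (\<lambda>\<omega>. \<Sum>a\<in>UNIV. \<Sum>b\<in>UNIV. Sig $ a $ a * S \<omega> $ b $ b) = T1 * T1"
proof -
  show "integrable M (\<lambda>\<omega>. \<Sum>a\<in>UNIV. \<Sum>b\<in>UNIV. Sig $ a $ a * S \<omega> $ b $ b)"
    by (rule int2(1)) (intro integrable_mult_right KS1(1))
  have "integral\<^sup>L M (\<lambda>\<omega>. \<Sum>a\<in>UNIV. \<Sum>b\<in>UNIV. Sig $ a $ a * S \<omega> $ b $ b)
      = (\<Sum>a\<in>UNIV. \<Sum>b\<in>UNIV. integral\<^sup>L M (\<lambda>\<omega>. Sig $ a $ a * S \<omega> $ b $ b))"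
    by (rule int2(2)) (intro integrable_mult_right KS1(1))
  also have "\<dots> = (\<Sum>a\<in>UNIV. \<Sum>b\<in>UNIV. Sig $ a $ a * Sig $ b $ b)"
    by (simp only: integral_mult_right_zero KS1(2))
  also have "\<dots> = T1 * T1" by (simp only: T1sq T1_def)
  finally show "integral\<^sup>L M (\<lambda>\<omega>. \<Sum>a\<in>UNIV. \<Sum>b\<in>UNIV. Sig $ a $ a * S \<omega> $ b $ b) = T1 * T1" .
qed

lemma eL2:
  shows "integrable M (\<lambda>\<omega>. \<Sum>a\<in>UNIV. \<Sum>b\<in>UNIV. Sig $ a $ b * S \<omega> $ b $ a)"
    and "integral\<^sup>L M (\<lambda>\<omega>. \<Sum>a\<in>UNIV. \<Sum>b\<in>UNIV. Sig $ a $ b * S \<omega> $ b $ a) = T2"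
proof -
  show "integrable M (\<lambda>\<omega>. \<Sum>a\<in>UNIV. \<Sum>b\<in>UNIV. Sig $ a $ b * S \<omega> $ b $ a)"
    by (rule int2(1)) (intro integrable_mult_right KS1(1))
  show "integral\<^sup>L M (\<lambda>\<omega>. \<Sum>a\<in>UNIV. \<Sum>b\<in>UNIV. Sig $ a $ b * S \<omega> $ b $ a) = T2"
    by (simp add: int2(2) KS1 integrable_mult_right T2e' T2_def)
qed

lemma eU:
  shows "integrable M (\<lambda>\<omega>. frob_sq (S \<omega> - Sig))"
  unfolding P4 by (rule int2(1)) (intro Bochner_Integration.integrable_add Bochner_Integration.integrable_diff
      integrable_mult_right KS1(1) KS2(1) integrable_const finite_measure.integrable_const
      prob_space.finite_measure ps)


lemma gamma_eq:
  shows "integrable M (\<lambda>\<omega>. frob_sq (S \<omega> - shrink_target (S \<omega>)))"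
    and "integral\<^sup>L M (\<lambda>\<omega>. frob_sq (S \<omega> - shrink_target (S \<omega>)))
       = T2 + (T1 * T1 + T2) / real n - (T1 * T1 + 2 * T2 / real n) / real CARD('p)"
proof -
  note e = P1[of "S \<omega>" for \<omega>]
  show "integrable M (\<lambda>\<omega>. frob_sq (S \<omega> - shrink_target (S \<omega>)))"
    unfolding e by (intro Bochner_Integration.integrable_diff integrable_divide eSS(1) eDD(1))
  show "integral\<^sup>L M (\<lambda>\<omega>. frob_sq (S \<omega> - shrink_target (S \<omega>)))
       = T2 + (T1 * T1 + T2) / real n - (T1 * T1 + 2 * T2 / real n) / real CARD('p)"
    unfolding e
    by (subst Bochner_Integration.integral_diff) (auto intro: eSS(1) eDD(1) integrable_divide simp: eSS(2) eDD(2))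
qed

lemma beta_eq:
  shows "integrable M (\<lambda>\<omega>. trace ((Sig - S \<omega>) ** (shrink_target (S \<omega>) - S \<omega>)))"
    and "integral\<^sup>L M (\<lambda>\<omega>. trace ((Sig - S \<omega>) ** (shrink_target (S \<omega>) - S \<omega>)))
       = T1 * T1 / real CARD('p) - T2 - (T1 * T1 + 2 * T2 / real n) / real CARD('p) + (T2 + (T2 + T1 * T1) / real n)"
proof -
  note e = P2[of Sig "S \<omega>" for \<omega>]
  have I1: "integrable M (\<lambda>\<omega>. (\<Sum>a\<in>UNIV. \<Sum>b\<in>UNIV. Sig $ a $ a * S \<omega> $ b $ b) / real CARD('p))"
    by (intro integrable_divide eL1(1))
  have I2: "integrable M (\<lambda>\<omega>. (\<Sum>a\<in>UNIV. \<Sum>b\<in>UNIV. S \<omega> $ a $ a * S \<omega> $ b $ b) / real CARD('p))"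
    by (intro integrable_divide eDD(1))
  show "integrable M (\<lambda>\<omega>. trace ((Sig - S \<omega>) ** (shrink_target (S \<omega>) - S \<omega>)))"
    unfolding e by (intro Bochner_Integration.integrable_diff Bochner_Integration.integrable_add I1 I2 eL2(1) eST(1))
  show "integral\<^sup>L M (\<lambda>\<omega>. trace ((Sig - S \<omega>) ** (shrink_target (S \<omega>) - S \<omega>)))
       = T1 * T1 / real CARD('p) - T2 - (T1 * T1 + 2 * T2 / real n) / real CARD('p) + (T2 + (T2 + T1 * T1) / real n)"
    unfolding e
    apply (subst Bochner_Integration.integral_add)
      apply (intro Bochner_Integration.integrable_diff I1 I2 eL2(1))
     apply (rule eST(1))
    apply (subst Bochner_Integration.integral_diff)
      apply (intro Bochner_Integration.integrable_diff I1 I2 eL2(1))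
     apply (rule I2)
    apply (subst Bochner_Integration.integral_diff)
      apply (rule I1)
     apply (rule eL2(1))
    apply (simp add: eL1(2) eL2(2) eDD(2) eST(2))
    done
qed

lemma R_eq:
  "integral\<^sup>L M (\<lambda>\<omega>. frob_sq ((1 - r) *\<^sub>R S \<omega> + r *\<^sub>R shrink_target (S \<omega>) - Sig))
   = integral\<^sup>L M (\<lambda>\<omega>. frob_sq (S \<omega> - Sig))
     - 2 * r * integral\<^sup>L M (\<lambda>\<omega>. trace ((Sig - S \<omega>) ** (shrink_target (S \<omega>) - S \<omega>)))
     + r\<^sup>2 * integral\<^sup>L M (\<lambda>\<omega>. frob_sq (S \<omega> - shrink_target (S \<omega>)))"
proof -
  have e: "frob_sq ((1 - r) *\<^sub>R S \<omega> + r *\<^sub>R shrink_target (S \<omega>) - Sig) =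
    frob_sq (S \<omega> - Sig) - 2 * r * trace ((Sig - S \<omega>) ** (shrink_target (S \<omega>) - S \<omega>)) + r\<^sup>2 * frob_sq (S \<omega> - shrink_target (S \<omega>))" for \<omega>
    by (rule P3[OF sc_sym])
  show ?thesis
    unfolding e
    apply (subst Bochner_Integration.integral_add)
      apply (intro Bochner_Integration.integrable_diff integrable_mult_right eU beta_eq(1))
     apply (intro integrable_mult_right gamma_eq(1))
    apply (subst Bochner_Integration.integral_diff)
      apply (rule eU)
     apply (intro integrable_mult_right beta_eq(1))
    apply simp
    done
qed

lemma Sig_diag_pos: "Sig $ a $ a > 0"
proof -
  have "axis a 1 \<noteq> (0::real^'p)" by (simp add: axis_eq_0_iff)
  then have "axis a 1 \<bullet> (Sig *v axis a 1) > 0" using sp by (simp add: sym_posdef_def)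
  then show ?thesis
    by (simp add: inner_axis' matrix_vector_mult_basis column_def)
qed

lemma T2_pos: "T2 > 0"
proof -
  obtain a :: 'p where True by simp
  have "(\<Sum>b\<in>UNIV. Sig $ a $ b * Sig $ a $ b) \<le> (\<Sum>a\<in>UNIV. \<Sum>b\<in>UNIV. Sig $ a $ b * Sig $ a $ b)"
    by (rule member_le_sum) (auto intro: sum_nonneg)
  moreover have "Sig $ a $ a * Sig $ a $ a \<le> (\<Sum>b\<in>UNIV. Sig $ a $ b * Sig $ a $ b)"
    by (rule member_le_sum) auto
  moreover have "Sig $ a $ a * Sig $ a $ a > 0" using Sig_diag_pos[of a] by simp
  ultimately show ?thesis by (simp add: T2_def T2e)
qed

lemma T1_T2: "T1 * T1 \<le> real CARD('p) * T2"
proof -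
  have "T1 * T1 = (\<Sum>a\<in>UNIV. Sig $ a $ a)\<^sup>2" by (simp add: T1_def trace_sum power2_eq_square)
  also have "\<dots> \<le> (\<Sum>a\<in>UNIV. (Sig $ a $ a)\<^sup>2) * real CARD('p)"
    by (rule sum_squared_le_sum_of_squares)
  also have "(\<Sum>a\<in>UNIV. (Sig $ a $ a)\<^sup>2) \<le> T2"
    unfolding T2_def T2e
    by (intro sum_mono) (auto simp: power2_eq_square intro: member_le_sum)
  then have "(\<Sum>a\<in>UNIV. (Sig $ a $ a)\<^sup>2) * real CARD('p) \<le> T2 * real CARD('p)"
    by (simp add: mult_right_mono)
  finally show ?thesis by (simp add: mult.commute)
qed

lemma main_result:
  assumes p2: "CARD('p) \<ge> 2"
  defines "R \<equiv> \<lambda>\<rho>::real. prob_space.expectation M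
               (\<lambda>\<omega>. frob_sq ((1 - \<rho>) *\<^sub>R sample_cov n (\<lambda>i. X i \<omega>) + \<rho> *\<^sub>R shrink_target (sample_cov n (\<lambda>i. X i \<omega>)) - Sig))"
  shows "(\<exists>!\<rho>. \<forall>r. R \<rho> \<le> R r)
    \<and> (\<forall>\<rho>. (\<forall>r. R \<rho> \<le> R r) \<longrightarrow>
          \<rho> = prob_space.expectation M (\<lambda>\<omega>. trace ((Sig - sample_cov n (\<lambda>i. X i \<omega>)) ** (shrink_target (sample_cov n (\<lambda>i. X i \<omega>)) - sample_cov n (\<lambda>i. X i \<omega>))))
                / prob_space.expectation M (\<lambda>\<omega>. frob_sq (sample_cov n (\<lambda>i. X i \<omega>) - shrink_target (sample_cov n (\<lambda>i. X i \<omega>))))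
        \<and> \<rho> = ((1 - 2 / real CARD('p)) * trace (Sig ** Sig) + (trace Sig)^2)
              / ((real n + 1 - 2 / real CARD('p)) * trace (Sig ** Sig)
                 + (1 - real n / real CARD('p)) * (trace Sig)^2))"
proof -
  define al where "al = integral\<^sup>L M (\<lambda>\<omega>. frob_sq (S \<omega> - Sig))"
  define be where "be = integral\<^sup>L M (\<lambda>\<omega>. trace ((Sig - S \<omega>) ** (shrink_target (S \<omega>) - S \<omega>)))"
  define ga where "ga = integral\<^sup>L M (\<lambda>\<omega>. frob_sq (S \<omega> - shrink_target (S \<omega>)))"
  define p where "p = real CARD('p)"
  have pp: "p \<ge> 2" using p2 by (simp add: p_def)
  have nn: "real n \<ge> 1" using n1 by simp
  have RR: "R r = al - 2 * r * be + r\<^sup>2 * ga" for r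
    unfolding R_def al_def be_def ga_def using R_eq by simp
  define Nu where "Nu = (1 - 2 / p) * T2 + T1 * T1"
  define De where "De = (real n + 1 - 2 / p) * T2 + (1 - real n / p) * (T1 * T1)"
  have gaD: "ga = De / real n"
    unfolding ga_def gamma_eq(2) De_def p_def using nn by (simp add: field_simps)
  have beN: "be = Nu / real n"
    unfolding be_def beta_eq(2) Nu_def p_def using nn by (simp add: field_simps)
  have T2p: "T2 > 0" by (rule T2_pos)
  have T12: "T1 * T1 \<le> p * T2" using T1_T2 by (simp add: p_def)
  have De_pos: "De > 0"
  proof (cases "real n \<le> p")
    case True
    have "1 - real n / p \<ge> 0" using True pp by (simp add: field_simps)
    then have "(1 - real n / p) * (T1 * T1) \<ge> 0"
      by (rule mult_nonneg_nonneg) simp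
    moreover have "(real n + 1 - 2 / p) * T2 > 0"
    proof -
      have "2 / p \<le> 1" using pp by (simp add: field_simps)
      then have "real n + 1 - 2 / p > 0" using nn by linarith
      then show ?thesis using T2p by simp
    qed
    ultimately show ?thesis unfolding De_def by linarith
  next
    case False
    have "(1 - real n / p) * (T1 * T1) \<ge> (1 - real n / p) * (p * T2)"
      using False pp T12 by (intro mult_left_mono_neg) (auto simp: field_simps)
    moreover have "(1 - real n / p) * (p * T2) = (p - real n) * T2"
      using pp by (simp add: field_simps)
    moreover have "(real n + 1 - 2 / p) * T2 + (p - real n) * T2 = (1 + p - 2 / p) * T2"
      by (simp add: algebra_simps)
    moreover have "(1 + p - 2 / p) * T2 > 0"
    proof -
      have "2 / p \<le> 1" using pp by (simp add: field_simps)
      then have "1 + p - 2 / p > 0" using pp by linarith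
      then show ?thesis using T2p by simp
    qed
    ultimately show ?thesis unfolding De_def by linarith
  qed
  have gap: "ga > 0" using De_pos nn by (simp add: gaD)
  define rs where "rs = be / ga"
  have diff: "R r - R rs = ga * (r - rs)\<^sup>2" for r
    unfolding RR rs_def using gap by (simp add: field_simps power2_eq_square)
  have minimal: "\<forall>r. R rs \<le> R r"
    using diff gap by (metis diff_ge_0_iff_ge zero_le_power2 mult_nonneg_nonneg less_imp_le)
  have uniq: "\<rho> = rs" if "\<forall>r. R \<rho> \<le> R r" for \<rho>
  proof -
    have "R \<rho> \<le> R rs" using that by blast
    then have "ga * (\<rho> - rs)\<^sup>2 \<le> 0" using diff[of \<rho>] by simp
    then have "(\<rho> - rs)\<^sup>2 \<le> 0" using gap by (simp add: mult_le_0_iff)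
    then show ?thesis by simp
  qed
  have rsF: "rs = ((1 - 2 / real CARD('p)) * trace (Sig ** Sig) + (trace Sig)^2)
              / ((real n + 1 - 2 / real CARD('p)) * trace (Sig ** Sig)
                 + (1 - real n / real CARD('p)) * (trace Sig)^2)"
  proof -
    have "rs = Nu / De" unfolding rs_def beN gaD using nn by simp
    then show ?thesis by (simp add: Nu_def De_def T1_def T2_def p_def power2_eq_square)
  qed
  show ?thesis
  proof (intro conjI allI impI)
    show "\<exists>!\<rho>. \<forall>r. R \<rho> \<le> R r" using minimal uniq by blast
  next
    fix \<rho> assume "\<forall>r. R \<rho> \<le> R r"
    then have "\<rho> = rs" by (rule uniq)
    then show "\<rho> = prob_space.expectation M (\<lambda>\<omega>. trace ((Sig - sample_cov n (\<lambda>i. X i \<omega>)) ** (shrink_target (sample_cov n (\<lambda>i. X i \<omega>)) - sample_cov n (\<lambda>i. X i \<omega>))))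
                / prob_space.expectation M (\<lambda>\<omega>. frob_sq (sample_cov n (\<lambda>i. X i \<omega>) - shrink_target (sample_cov n (\<lambda>i. X i \<omega>))))"
      unfolding rs_def be_def ga_def by simp
  next
    fix \<rho> assume "\<forall>r. R \<rho> \<le> R r"
    then have "\<rho> = rs" by (rule uniq)
    then show "\<rho> = ((1 - 2 / real CARD('p)) * trace (Sig ** Sig) + (trace Sig)^2)
              / ((real n + 1 - 2 / real CARD('p)) * trace (Sig ** Sig)
                 + (1 - real n / real CARD('p)) * (trace Sig)^2)"
      using rsF by simp
  qed
qed

end


theorem theorem1:
  fixes M :: "'a measure" and Sig :: "real^'p^'p" and n :: nat
    and X :: "nat \<Rightarrow> 'a \<Rightarrow> real^'p"
  assumes "prob_space M"
    and "CARD('p) \<ge> 2" and "n \<ge> 1"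
    and "sym_posdef Sig"
    and "prob_space.indep_vars M (\<lambda>_. borel) X {1..n}"
    and "\<And>i. i \<in> {1..n} \<Longrightarrow> distributed M lborel (X i) (mvn_density Sig)"
  defines "R \<equiv> \<lambda>\<rho>::real. prob_space.expectation M
               (\<lambda>\<omega>. frob_sq ((1 - \<rho>) *\<^sub>R sample_cov n (\<lambda>i. X i \<omega>) + \<rho> *\<^sub>R shrink_target (sample_cov n (\<lambda>i. X i \<omega>)) - Sig))"
  shows "(\<exists>!\<rho>. \<forall>r. R \<rho> \<le> R r)
    \<and> (\<forall>\<rho>. (\<forall>r. R \<rho> \<le> R r) \<longrightarrow>
          \<rho> = prob_space.expectation M (\<lambda>\<omega>. trace ((Sig - sample_cov n (\<lambda>i. X i \<omega>)) ** (shrink_target (sample_cov n (\<lambda>i. X i \<omega>)) - sample_cov n (\<lambda>i. X i \<omega>))))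
                / prob_space.expectation M (\<lambda>\<omega>. frob_sq (sample_cov n (\<lambda>i. X i \<omega>) - shrink_target (sample_cov n (\<lambda>i. X i \<omega>))))
        \<and> \<rho> = ((1 - 2 / real CARD('p)) * trace (Sig ** Sig) + (trace Sig)^2)
              / ((real n + 1 - 2 / real CARD('p)) * trace (Sig ** Sig)
                 + (1 - real n / real CARD('p)) * (trace Sig)^2))"
  unfolding R_def
  by (rule main_result[OF assms(1) assms(3) assms(4) assms(5) assms(6) assms(2)])

end
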